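(* Fix $L,V,W,K>0$, $\pi\in(0,1)$ and $k_0\in[0,K]$, and regard $\phi_1=\frac{k_0}{k_1}\pi C$ and $\phi_2=\frac{K-k_0}{K-k_2}\pi C$ as functions of the cycle length $T>0$ (with $k_1,k_2$ as in the context). Then: (1) $\phi_1$ is continuous in $T$; $\phi_1$ equals its global minimum $\pi Vk_0$ for all $T\ge\frac1\pi\frac LV$, reaches its global maximum $Vk_0$ at $T=\frac1{j_1}\frac LV$, and reaches local minima $\frac{j_1+\pi}{j_1+1}Vk_0$ at $T=\frac1{j_1+\pi}\frac LV$, for positive integers $j_1$. In particular, for $\frac LV\le T\le\frac1\pi\frac LV$, $\phi_1=\frac{k_0L}{T}$. (2) $\phi_2$ is continuous in $T$; $\phi_2$ equals its global minimum $\pi(K-k_0)W$ for all $T\ge\frac1\pi\frac LW$, reaches its global maximum $(K-k_0)W$ at $T=\frac1{j_2}\frac LW$, and reaches local minima $\frac{j_2+\pi}{j_2+1}(K-k_0)W$ at $T=\frac1{j_2+\pi}\frac LW$, for positive integers $j_2$. In particular, for $\frac LW\le T\le\frac1\pi\frac LW$, $\phi_2=\frac{(K-k_0)L}{T}$.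
   Context: $\bar K=\frac{W}{V+W}K$, $C=V\bar K$. For a cycle length $T>0$ write $\frac LV=(j_1+\alpha_1)T$ with $j_1=\lfloor L/(VT)\rfloor$, $0\le\alpha_1<1$, and $\frac LW=(j_2+\alpha_2)T$ with $j_2=\lfloor L/(WT)\rfloor$, $0\le\alpha_2<1$; define $k_1=\frac{j_1+\min\{\alpha_1/\pi,1\}}{j_1+\alpha_1}\pi\bar K$ and $k_2=K-\frac{j_2+\min\{\alpha_2/\pi,1\}}{j_2+\alpha_2}\pi\frac CW$. (These arise from a ring road of length $L$ with LWR traffic, triangular fundamental diagram $\min\{Vk,(K-k)W\}$, average density $k_0$, and a pretimed signal of cycle length $T$ and effective green ratio $\pi$.) *)

theory Defs
  imports "HOL-Analysis.Analysis"
begin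

text \<open>Ring road of length L, free-flow speed V, backward wave speed W, jam density K,
  effective green ratio p (the paper's pi), cycle length T.\<close>

definition Kbar :: "real \<Rightarrow> real \<Rightarrow> real \<Rightarrow> real" where
  "Kbar V W K = W / (V + W) * K"

definition Ccap :: "real \<Rightarrow> real \<Rightarrow> real \<Rightarrow> real" where
  "Ccap V W K = V * Kbar V W K"

definition j1 :: "real \<Rightarrow> real \<Rightarrow> real \<Rightarrow> real" where
  "j1 L V T = real_of_int \<lfloor>L / (V * T)\<rfloor>"

definition alpha1 :: "real \<Rightarrow> real \<Rightarrow> real \<Rightarrow> real" where
  "alpha1 L V T = L / (V * T) - j1 L V T"

definition j2 :: "real \<Rightarrow> real \<Rightarrow> real \<Rightarrow> real" where
  "j2 L W T = real_of_int \<lfloor>L / (W * T)\<rfloor>"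

definition alpha2 :: "real \<Rightarrow> real \<Rightarrow> real \<Rightarrow> real" where
  "alpha2 L W T = L / (W * T) - j2 L W T"

definition k1 :: "real \<Rightarrow> real \<Rightarrow> real \<Rightarrow> real \<Rightarrow> real \<Rightarrow> real \<Rightarrow> real" where
  "k1 L V W K p T =
     (j1 L V T + min (alpha1 L V T / p) 1) / (j1 L V T + alpha1 L V T) * p * Kbar V W K"

definition k2 :: "real \<Rightarrow> real \<Rightarrow> real \<Rightarrow> real \<Rightarrow> real \<Rightarrow> real \<Rightarrow> real" where
  "k2 L V W K p T =
     K - (j2 L W T + min (alpha2 L W T / p) 1) / (j2 L W T + alpha2 L W T) * p * (Ccap V W K / W)"

definition phi1 :: "real \<Rightarrow> real \<Rightarrow> real \<Rightarrow> real \<Rightarrow> real \<Rightarrow> real \<Rightarrow> real \<Rightarrow> real" where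
  "phi1 L V W K p k0 T = k0 / k1 L V W K p T * p * Ccap V W K"

definition phi2 :: "real \<Rightarrow> real \<Rightarrow> real \<Rightarrow> real \<Rightarrow> real \<Rightarrow> real \<Rightarrow> real \<Rightarrow> real" where
  "phi2 L V W K p k0 T = (K - k0) / (K - k2 L V W K p T) * p * Ccap V W K"

definition local_min_pos :: "(real \<Rightarrow> real) \<Rightarrow> real \<Rightarrow> bool" where
  "local_min_pos f T0 \<longleftrightarrow> (\<exists>d>0. \<forall>T. T > 0 \<and> \<bar>T - T0\<bar> < d \<longrightarrow> f T0 \<le> f T)"

end

theory Submission imports Defs begin
definition Dp :: "real \<Rightarrow> real \<Rightarrow> real" where
  "Dp p x = of_int \<lfloor>x\<rfloor> + min ((x - of_int \<lfloor>x\<rfloor>) / p) 1"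
definition Gp :: "real \<Rightarrow> real \<Rightarrow> real" where "Gp p x = x / Dp p x"

lemma frac_bounds: "0 \<le> x - of_int \<lfloor>x\<rfloor>" "x - of_int \<lfloor>x\<rfloor> < (1::real)"
  by linarith+

lemma a_le_ap: "0 < p \<Longrightarrow> p \<le> 1 \<Longrightarrow> 0 \<le> (a::real) \<Longrightarrow> a \<le> a / p"
  by (simp add: le_divide_eq mult_left_le)

lemma D_ge: assumes "0 < p" "p \<le> 1" shows "x \<le> Dp p x"
  using a_le_ap[OF assms frac_bounds(1)[of x]] frac_bounds[of x] unfolding Dp_def by linarith

lemma D_le: assumes "0 < p" "p \<le> 1" shows "p * Dp p x \<le> p * of_int \<lfloor>x\<rfloor> + (x - of_int \<lfloor>x\<rfloor>)"
proof -
  have "p * min ((x - of_int \<lfloor>x\<rfloor>) / p) 1 \<le> p * ((x - of_int \<lfloor>x\<rfloor>) / p)"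
    using assms by (intro mult_left_mono) auto
  thus ?thesis using assms unfolding Dp_def by (simp add: distrib_left)
qed

lemma G_ge: assumes "0 < p" "p \<le> 1" "x > 0" shows "p \<le> Gp p x"
proof -
  have "0 < Dp p x" using D_ge[OF assms(1,2), of x] assms by linarith
  moreover have "p * Dp p x \<le> x"
  proof -
    have "(0::real) \<le> of_int \<lfloor>x\<rfloor>" using assms(3) by simp
    hence "p * of_int \<lfloor>x\<rfloor> \<le> of_int \<lfloor>x\<rfloor>" using mult_right_mono[of p 1 "of_int \<lfloor>x\<rfloor>"] assms(2) by simp
    thus ?thesis using D_le[OF assms(1,2), of x] by linarith
  qed
  ultimately show ?thesis unfolding Gp_def by (simp add: le_divide_eq)
qed

lemma G_le: assumes "0 < p" "p \<le> 1" "x > 0" shows "Gp p x \<le> 1"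
  using D_ge[OF assms(1,2), of x] assms unfolding Gp_def by (simp add: divide_le_eq)

lemma G_small: assumes "0 < p" "p < 1" "x > 0" "x \<le> p" shows "Gp p x = p"
proof -
  have "\<lfloor>x\<rfloor> = 0" using assms by (simp add: floor_eq_iff)
  thus ?thesis using assms unfolding Gp_def Dp_def by (simp add: min_def field_simps)
qed

lemma G_nat: assumes "0 < p" "p < 1" "n \<ge> (1::nat)" shows "Gp p (real n) = 1"
  using assms unfolding Gp_def Dp_def by simp

lemma G_jp: assumes "0 < p" "p < 1" shows "Gp p (real n + p) = (real n + p) / (real n + 1)"
proof -
  have "\<lfloor>real n + p\<rfloor> = int n" using assms by (simp add: floor_eq_iff)
  thus ?thesis using assms unfolding Gp_def Dp_def by simp
qed

lemma G_mid: assumes "0 < p" "p < 1" "p \<le> x" "x \<le> 1" shows "Gp p x = x"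
proof (cases "x = 1")
  case True thus ?thesis unfolding Gp_def Dp_def by simp
next
  case False
  hence "\<lfloor>x\<rfloor> = 0" using assms by (simp add: floor_eq_iff)
  moreover have "x / p \<ge> 1" using assms by (simp add: le_divide_eq)
  ultimately show ?thesis using assms unfolding Gp_def Dp_def by (simp add: min_def)
qed

lemma frac_le_eq_aux: "(0::real) < b \<Longrightarrow> 0 < d \<Longrightarrow> a * d \<le> c * b \<Longrightarrow> a / b \<le> c / d"
  by (simp add: divide_simps)

lemma G_loc: assumes "0 < p" "p < 1" "n \<ge> (1::nat)" "real n < x" "x < real n + 1"
  shows "(real n + p) / (real n + 1) \<le> Gp p x"
proof -
  have fl: "\<lfloor>x\<rfloor> = int n" using assms by (simp add: floor_eq_iff)
  define a where "a = x - real n"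
  have a: "0 < a" "a < 1" using assms a_def by auto
  have x: "x = real n + a" using a_def by simp
  show ?thesis
  proof (cases "a \<le> p")
    case True
    hence D: "Dp p x = real n + a / p" unfolding Dp_def fl using assms a
      by (simp add: min_def x divide_le_eq)
    have pos: "0 < real n + a / p" using a assms by (simp add: add_pos_pos)
    have "(real n + p) * (real n + a / p) \<le> (real n + a) * (real n + 1)"
    proof -
      have "(real n + a) * (real n + 1) - (real n + p) * (real n + a / p)
            = real n * ((1 - p) * (1 - a / p))"
        using assms by (simp add: field_simps)
      moreover have "0 \<le> real n * ((1 - p) * (1 - a / p))"
        using True assms by (intro mult_nonneg_nonneg) (auto simp: divide_le_eq)
      ultimately show ?thesis by linarith
    qed
    hence "(real n + p) / (real n + 1) \<le> (real n + a) / (real n + a / p)"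
      using pos by (simp add: frac_le_eq_aux)
    thus ?thesis unfolding Gp_def D using x by simp
  next
    case False
    hence D: "Dp p x = real n + 1" unfolding Dp_def fl using assms a
      by (simp add: min_def x le_divide_eq)
    show ?thesis unfolding Gp_def D using False x
      by (intro divide_right_mono) auto
  qed
qed
lemma D_cont_piece: assumes "0 < p" "p \<le> 1"
  shows "continuous_on {of_int n .. of_int n + 1} (Dp p)"
proof -
  have "continuous_on {of_int n .. of_int n + 1} (\<lambda>x. of_int n + min ((x - of_int n) / p) (1::real))"
    using assms by (intro continuous_intros) auto
  moreover have "Dp p x = of_int n + min ((x - of_int n) / p) 1" if "x \<in> {of_int n .. of_int n + 1}" for x
  proof (cases "x = of_int n + 1")
    case True
    hence "\<lfloor>x\<rfloor> = n + 1" by simp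
    thus ?thesis using True assms unfolding Dp_def by (simp add: min_def le_divide_eq)
  next
    case False
    hence "\<lfloor>x\<rfloor> = n" using that by (simp add: floor_eq_iff)
    thus ?thesis unfolding Dp_def by simp
  qed
  ultimately show ?thesis using continuous_on_cong by (metis (no_types, lifting))
qed

lemma D_isCont: assumes "0 < p" "p \<le> 1" shows "isCont (Dp p) x"
proof -
  define n where "n = \<lfloor>x\<rfloor>"
  have "continuous_on ({of_int (n-1) .. of_int (n-1) + 1} \<union> {of_int n .. of_int n + 1}) (Dp p)"
    by (intro continuous_on_closed_Un D_cont_piece assms) auto
  moreover have "{of_int (n-1) .. of_int (n-1) + 1} \<union> {of_int n .. of_int n + 1} = {of_int n - 1 .. of_int n + (1::real)}"
    by auto
  ultimately have c: "continuous_on {of_int n - 1 .. of_int n + (1::real)} (Dp p)" by simp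
  have "continuous_on {of_int n - 1 <..< of_int n + (1::real)} (Dp p)"
    by (rule continuous_on_subset[OF c]) auto
  moreover have "x \<in> {of_int n - 1 <..< of_int n + (1::real)}"
    unfolding n_def using frac_bounds[of x] by simp linarith
  ultimately show ?thesis using continuous_on_eq_continuous_at open_greaterThanLessThan by blast
qed

lemma G_isCont: assumes "0 < p" "p \<le> 1" "x > 0" shows "isCont (Gp p) x"
proof -
  have "0 < Dp p x" using D_ge[OF assms(1,2), of x] assms by linarith
  hence "isCont (\<lambda>x. x / Dp p x) x" using D_isCont[OF assms(1,2)]
    by (intro continuous_intros) auto
  thus ?thesis unfolding Gp_def[abs_def] .
qed

lemma generic:
  fixes f :: "real \<Rightarrow> real"
  assumes L: "L > 0" and S: "S > 0" and p: "0 < p" "p < 1" and c: "c \<ge> 0"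
    and eq: "\<And>T. T > 0 \<Longrightarrow> f T = c * S * Gp p (L / (S * T))"
  shows "continuous_on {0<..} f
     \<and> (\<forall>T>0. p * c * S \<le> f T)
     \<and> (\<forall>T. T \<ge> (1 / p) * (L / S) \<longrightarrow> f T = p * c * S)
     \<and> (\<forall>T>0. f T \<le> c * S)
     \<and> (\<forall>j::nat. j \<ge> 1 \<longrightarrow> f ((1 / real j) * (L / S)) = c * S)
     \<and> (\<forall>j::nat. j \<ge> 1 \<longrightarrow>
          f ((1 / (real j + p)) * (L / S)) = (real j + p) / (real j + 1) * c * S
          \<and> local_min_pos f ((1 / (real j + p)) * (L / S)))
     \<and> (\<forall>T. L / S \<le> T \<and> T \<le> (1 / p) * (L / S) \<longrightarrow> f T = c * L / T)"
proof (intro conjI allI impI)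
  have p1: "p \<le> 1" using p by simp
  have "continuous_on {0<..} (\<lambda>T. c * S * Gp p (L / (S * T)))"
  proof (rule continuous_at_imp_continuous_on, intro ballI)
    fix T :: real assume "T \<in> {0<..}"
    hence T: "T > 0" by simp
    have "isCont (\<lambda>T. L / (S * T)) T" using T S by (intro continuous_intros) auto
    moreover have "isCont (Gp p) (L / (S * T))" using G_isCont[OF p(1) p1] L S T by simp
    ultimately have "isCont (\<lambda>T. Gp p (L / (S * T))) T" by (rule isCont_o2)
    thus "isCont (\<lambda>T. c * S * Gp p (L / (S * T))) T" by (intro continuous_intros)
  qed
  thus "continuous_on {0<..} f" using eq by (metis (no_types, lifting) continuous_on_cong greaterThan_iff)
next
  fix T :: real assume T: "T > 0"
  have "p \<le> Gp p (L / (S * T))" using G_ge[OF p(1)] p L S T by simp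
  hence "(c * S) * p \<le> (c * S) * Gp p (L / (S * T))" using c S by (intro mult_left_mono) auto
  thus "p * c * S \<le> f T" using eq[OF T] by (simp add: mult_ac)
next
  fix T :: real assume T: "T > 0"
  have "Gp p (L / (S * T)) \<le> 1" using G_le[OF p(1)] p L S T by simp
  hence "(c * S) * Gp p (L / (S * T)) \<le> (c * S) * 1" using c S by (intro mult_left_mono) auto
  thus "f T \<le> c * S" using eq[OF T] by (simp add: mult_ac)
next
  fix T :: real assume T: "T \<ge> (1 / p) * (L / S)"
  have Tp: "T > 0" using T p L S by (smt (verit) divide_pos_pos mult_pos_pos)
  have "L / (S * T) \<le> p" using T p S Tp by (simp add: divide_le_eq field_simps)
  hence "Gp p (L / (S * T)) = p" using G_small[OF p] L S Tp by simp
  thus "f T = p * c * S" using eq[OF Tp] by simp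
next
  fix j :: nat assume j: "j \<ge> 1"
  have Tp: "(1 / real j) * (L / S) > 0" using j L S by simp
  have "L / (S * ((1 / real j) * (L / S))) = real j" using j L S by (simp add: field_simps)
  thus "f ((1 / real j) * (L / S)) = c * S" using eq[OF Tp] G_nat[OF p j] by simp
next
  fix j :: nat assume j: "j \<ge> 1"
  have jp: "real j + p > 0" using p by simp
  have Tp: "(1 / (real j + p)) * (L / S) > 0" using jp L S by simp
  have "L / (S * ((1 / (real j + p)) * (L / S))) = real j + p" using jp L S by (simp add: field_simps)
  thus "f ((1 / (real j + p)) * (L / S)) = (real j + p) / (real j + 1) * c * S"
    using eq[OF Tp] G_jp[OF p, of j] by simp
next
  fix j :: nat assume j: "j \<ge> 1"
  define T0 where "T0 = (1 / (real j + p)) * (L / S)"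
  have jp: "real j + p > 0" using p by simp
  have Tp: "T0 > 0" using jp L S T0_def by simp
  have x0: "L / (S * T0) = real j + p" using jp L S T0_def by (simp add: field_simps)
  have fT0: "f T0 = (real j + p) / (real j + 1) * c * S"
    using eq[OF Tp] G_jp[OF p, of j] x0 by simp
  have "isCont (\<lambda>T. L / (S * T)) T0" using Tp S by (intro continuous_intros) auto
  then obtain d where d: "d > 0" "\<And>T. dist T T0 < d \<Longrightarrow> dist (L / (S * T)) (L / (S * T0)) < min p (1 - p)"
    unfolding continuous_at_eps_delta using p by (metis min_less_iff_conj diff_gt_0_iff_gt)
  show "local_min_pos f ((1 / (real j + p)) * (L / S))"
    unfolding local_min_pos_def T0_def[symmetric]
  proof (intro exI[of _ d] conjI allI impI d(1))
    fix T assume T: "T > 0 \<and> \<bar>T - T0\<bar> < d"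
    hence "dist (L / (S * T)) (real j + p) < min p (1 - p)" using d(2)[of T] x0 by (simp add: dist_real_def)
    hence "real j < L / (S * T)" "L / (S * T) < real j + 1" by (auto simp: dist_real_def)
    hence "(real j + p) / (real j + 1) \<le> Gp p (L / (S * T))" using G_loc[OF p j] by simp
    thus "f T0 \<le> f T" unfolding fT0 eq[OF T[THEN conjunct1]] using c S
      by (metis mult.commute mult_left_mono mult_nonneg_nonneg less_imp_le mult.assoc)
  qed
next
  fix T :: real assume T: "L / S \<le> T \<and> T \<le> (1 / p) * (L / S)"
  have Tp: "T > 0" using T L S by (smt (verit) divide_pos_pos)
  have "p \<le> L / (S * T)" "L / (S * T) \<le> 1" using T p S Tp L by (auto simp: divide_le_eq le_divide_eq field_simps)
  hence "Gp p (L / (S * T)) = L / (S * T)" using G_mid[OF p] by simp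
  thus "f T = c * L / T" using eq[OF Tp] S by simp
qed

lemma phi1_eq: assumes "L > 0" "V > 0" "W > 0" "K > 0" "0 < p" "p < 1" "T > 0"
  shows "phi1 L V W K p k0 T = k0 * V * Gp p (L / (V * T))"
proof -
  define x where "x = L / (V * T)"
  have x: "x > 0" using assms x_def by simp
  have D: "Dp p x > 0" using D_ge[of p x] assms x by simp
  have s: "j1 L V T + alpha1 L V T = x" "j1 L V T + min (alpha1 L V T / p) 1 = Dp p x"
    unfolding j1_def alpha1_def Dp_def x_def by simp_all
  have Kb: "Kbar V W K > 0" using assms unfolding Kbar_def by simp
  show ?thesis unfolding phi1_def k1_def s Ccap_def Gp_def x_def[symmetric]
    using x D Kb assms by (simp add: field_simps)
qed

lemma phi2_eq: assumes "L > 0" "V > 0" "W > 0" "K > 0" "0 < p" "p < 1" "T > 0"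
  shows "phi2 L V W K p k0 T = (K - k0) * W * Gp p (L / (W * T))"
proof -
  define x where "x = L / (W * T)"
  have x: "x > 0" using assms x_def by simp
  have D: "Dp p x > 0" using D_ge[of p x] assms x by simp
  have s: "j2 L W T + alpha2 L W T = x" "j2 L W T + min (alpha2 L W T / p) 1 = Dp p x"
    unfolding j2_def alpha2_def Dp_def x_def by simp_all
  have VW: "V + W > 0" using assms by simp
  have e: "K - k2 L V W K p T = Dp p x / x * p * (V * K / (V + W))"
    unfolding k2_def s Ccap_def Kbar_def using assms by simp
  define M where "M = V * K / (V + W)"
  have M: "M > 0" using assms VW M_def by simp
  have c: "Ccap V W K = M * W" unfolding Ccap_def Kbar_def M_def by simp
  show ?thesis unfolding phi2_def unfolding e c Gp_def x_def[symmetric] M_def[symmetric]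
    using x D assms M by (simp add: field_simps)
qed

theorem lemma3p4:
  fixes L V W K p k0 :: real
  assumes "L > 0" "V > 0" "W > 0" "K > 0" "0 < p" "p < 1" "0 \<le> k0" "k0 \<le> K"
  shows
   "(continuous_on {0<..} (phi1 L V W K p k0)
     \<and> (\<forall>T>0. p * V * k0 \<le> phi1 L V W K p k0 T)
     \<and> (\<forall>T. T \<ge> (1 / p) * (L / V) \<longrightarrow> phi1 L V W K p k0 T = p * V * k0)
     \<and> (\<forall>T>0. phi1 L V W K p k0 T \<le> V * k0)
     \<and> (\<forall>j::nat. j \<ge> 1 \<longrightarrow> phi1 L V W K p k0 ((1 / real j) * (L / V)) = V * k0)
     \<and> (\<forall>j::nat. j \<ge> 1 \<longrightarrow>
          phi1 L V W K p k0 ((1 / (real j + p)) * (L / V)) = (real j + p) / (real j + 1) * V * k0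
          \<and> local_min_pos (phi1 L V W K p k0) ((1 / (real j + p)) * (L / V)))
     \<and> (\<forall>T. L / V \<le> T \<and> T \<le> (1 / p) * (L / V) \<longrightarrow> phi1 L V W K p k0 T = k0 * L / T))
  \<and> (continuous_on {0<..} (phi2 L V W K p k0)
     \<and> (\<forall>T>0. p * (K - k0) * W \<le> phi2 L V W K p k0 T)
     \<and> (\<forall>T. T \<ge> (1 / p) * (L / W) \<longrightarrow> phi2 L V W K p k0 T = p * (K - k0) * W)
     \<and> (\<forall>T>0. phi2 L V W K p k0 T \<le> (K - k0) * W)
     \<and> (\<forall>j::nat. j \<ge> 1 \<longrightarrow> phi2 L V W K p k0 ((1 / real j) * (L / W)) = (K - k0) * W)
     \<and> (\<forall>j::nat. j \<ge> 1 \<longrightarrow>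
          phi2 L V W K p k0 ((1 / (real j + p)) * (L / W)) = (real j + p) / (real j + 1) * (K - k0) * W
          \<and> local_min_pos (phi2 L V W K p k0) ((1 / (real j + p)) * (L / W)))
     \<and> (\<forall>T. L / W \<le> T \<and> T \<le> (1 / p) * (L / W) \<longrightarrow> phi2 L V W K p k0 T = (K - k0) * L / T))"
proof -
  have A: "k0 \<ge> 0" "K - k0 \<ge> 0" using assms by auto
  note g1 = generic[OF assms(1,2,5,6) A(1), of "phi1 L V W K p k0", OF phi1_eq[OF assms(1-6)]]
  note g2 = generic[OF assms(1,3,5,6) A(2), of "phi2 L V W K p k0", OF phi2_eq[OF assms(1-6)]]
  show ?thesis using g1 g2 by (simp add: mult_ac)
qed

end
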